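(* Let $W$ be an eventually periodic subset of $\mathbb{Z}^d$ with periods $u_1,\dots,u_d$, and let $\mathscr{W}_1,\mathcal{W}$ be as defined in the context. Suppose $\mathscr{W}_1\neq\emptyset$ and there exists a nonempty finite subset $\mathcal{M}\subseteq\mathbb{Z}^d$ such that: (1) $\pi$ restricted to $\mathcal{M}$ is injective; (2) $\pi(\mathcal{M}+(\mathcal{W}\cup\mathscr{W}_1))=\mathbb{Z}^d/\mathcal{L}$; (3) for every $m\in\mathcal{M}$ there exists $w\in\mathscr{W}_1$ such that $m+w\not\equiv m'+w'\pmod{\mathcal{L}}$ for all $m'\in\mathcal{M}\setminus\{m\}$ and all $w'\in\mathcal{W}\cup\mathscr{W}_1$. Then $W$ has a minimal complement in $\mathbb{Z}^d$.
   Context: $d\geqslant1$, $\mathbb{N}=\{0,1,2,\dots\}$. Let $u_1,\dots,u_d\in\mathbb{Z}^d$ satisfy no nontrivial $\mathbb{Z}$-linear relation, $\mathcal{L}=\mathbb{Z}u_1+\dots+\mathbb{Z}u_d$, $P=\mathbb{N}u_1+\dots+\mathbb{N}u_d$, $\pi:\mathbb{Z}^d\to\mathbb{Z}^d/\mathcal{L}$ the quotient map. A nonempty $X\subseteq\mathbb{Z}^d$ is eventually periodic with periods $u_1,\dots,u_d$ if $X\subseteq F+P$ for some nonempty finite $F\subseteq\mathbb{Z}^d$ and $x+P\subseteq X$ for all but finitely many $x\in X$. For such $W$: $\mathscr{W}=\{w\in W:w+P\not\subseteq W\}$; $\mathcal{W}=\{w\in W\setminus\mathscr{W}:(w-P)\cap(W\setminus\mathscr{W})=\{w\}\}$;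 $\mathscr{W}_1$ is the set of elements of $\mathscr{W}$ congruent modulo $\mathcal{L}$ to no element of $\mathcal{W}$. A nonempty $M\subseteq\mathbb{Z}^d$ is a complement of $W$ if $M+W=\mathbb{Z}^d$, and a minimal complement if no proper subset of $M$ is a complement of $W$. *)

theory Defs
  imports "HOL-Analysis.Analysis"
begin

text \<open>Z^d is modelled as int ^ 'd, with 'd a finite index type of cardinality d.
  The periods u_1..u_d are a family u indexed by 'd.\<close>

definition sumset :: "('a::plus) set \<Rightarrow> 'a set \<Rightarrow> 'a set" where
  "sumset A B = {a + b | a b. a \<in> A \<and> b \<in> B}"

definition lin_indep_Z :: "('d::finite \<Rightarrow> int ^ 'd) \<Rightarrow> bool" where
  "lin_indep_Z u \<longleftrightarrow> (\<forall>c :: 'd \<Rightarrow> int. (\<Sum>i\<in>UNIV. c i *s u i) = 0 \<longrightarrow> (\<forall>i. c i = 0))"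

definition lattice :: "('d::finite \<Rightarrow> int ^ 'd) \<Rightarrow> (int ^ 'd) set" where
  "lattice u = {\<Sum>i\<in>UNIV. c i *s u i | c. True}"

definition cone :: "('d::finite \<Rightarrow> int ^ 'd) \<Rightarrow> (int ^ 'd) set" where
  "cone u = {\<Sum>i\<in>UNIV. c i *s u i | c. \<forall>i. c i \<ge> 0}"

text \<open>congruence modulo the lattice L (i.e. equal images under pi)\<close>
definition congL :: "('d::finite \<Rightarrow> int ^ 'd) \<Rightarrow> int ^ 'd \<Rightarrow> int ^ 'd \<Rightarrow> bool" where
  "congL u x y \<longleftrightarrow> x - y \<in> lattice u"

definition eventually_periodic :: "('d::finite \<Rightarrow> int ^ 'd) \<Rightarrow> (int ^ 'd) set \<Rightarrow> bool" where
  "eventually_periodic u X \<longleftrightarrow> X \<noteq> {} \<and>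
     (\<exists>F. finite F \<and> F \<noteq> {} \<and> X \<subseteq> sumset F (cone u)) \<and>
     finite {x \<in> X. \<not> ((\<lambda>p. x + p) ` cone u \<subseteq> X)}"

definition scrW :: "('d::finite \<Rightarrow> int ^ 'd) \<Rightarrow> (int ^ 'd) set \<Rightarrow> (int ^ 'd) set" where
  "scrW u W = {w \<in> W. \<not> ((\<lambda>p. w + p) ` cone u \<subseteq> W)}"

definition calW :: "('d::finite \<Rightarrow> int ^ 'd) \<Rightarrow> (int ^ 'd) set \<Rightarrow> (int ^ 'd) set" where
  "calW u W = {w \<in> W - scrW u W. (\<lambda>p. w - p) ` cone u \<inter> (W - scrW u W) = {w}}"

definition scrW1 :: "('d::finite \<Rightarrow> int ^ 'd) \<Rightarrow> (int ^ 'd) set \<Rightarrow> (int ^ 'd) set" where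
  "scrW1 u W = {w \<in> scrW u W. \<forall>v \<in> calW u W. \<not> congL u w v}"

definition is_complement :: "('a::plus) set \<Rightarrow> 'a set \<Rightarrow> bool" where
  "is_complement M W \<longleftrightarrow> M \<noteq> {} \<and> sumset M W = UNIV"

definition is_minimal_complement :: "('a::plus) set \<Rightarrow> 'a set \<Rightarrow> bool" where
  "is_minimal_complement M W \<longleftrightarrow> is_complement M W \<and> (\<forall>M'. M' \<subset> M \<longrightarrow> \<not> is_complement M' W)"

end

theory Submission
  imports Defs
begin

definition lc :: "('d::finite \<Rightarrow> int ^ 'd) \<Rightarrow> ('d \<Rightarrow> int) \<Rightarrow> int ^ 'd" where
  "lc u c = (\<Sum>i\<in>UNIV. c i *s u i)"

lemma lc_add: "lc u a + lc u b = lc u (\<lambda>i. a i + b i)"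
  by (simp add: lc_def sum.distrib vector_sadd_rdistrib)

lemma lc_diff: "lc u a - lc u b = lc u (\<lambda>i. a i - b i)"
  by (simp add: lc_def sum_subtractf vector_sub_rdistrib)

lemma lc_neg: "- lc u a = lc u (\<lambda>i. - a i)"
  by (simp add: lc_def vector_smult_lneg sum_negf)

lemma lc_zero: "lc u (\<lambda>i. 0) = 0"
  by (simp add: lc_def)

lemma lattice_lc: "lattice u = range (lc u)"
  by (auto simp: lattice_def lc_def)

lemma cone_lc: "cone u = {lc u c | c. \<forall>i. c i \<ge> 0}"
  by (auto simp: cone_def lc_def)

lemma lc_inj:
  assumes "lin_indep_Z u" "lc u a = lc u b" shows "a = b"
proof -
  have "lc u (\<lambda>i. a i - b i) = 0" using assms(2) lc_diff[of u a b] by simp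
  hence "\<forall>i. a i - b i = 0" using assms(1) unfolding lin_indep_Z_def lc_def by (erule_tac x="\<lambda>i. a i - b i" in allE) simp
  thus ?thesis by auto
qed

lemma zero_cone: "0 \<in> cone u"
  unfolding cone_lc using lc_zero[of u] by (smt (verit, best) mem_Collect_eq)

lemma cone_add: "p \<in> cone u \<Longrightarrow> q \<in> cone u \<Longrightarrow> p + q \<in> cone u"
  unfolding cone_lc by (auto simp: lc_add)

lemma cone_lattice: "cone u \<subseteq> lattice u"
  unfolding cone_lc lattice_lc by auto

lemma lattice_add: "p \<in> lattice u \<Longrightarrow> q \<in> lattice u \<Longrightarrow> p + q \<in> lattice u"
  unfolding lattice_lc by (auto simp: lc_add)

lemma lattice_diff: "p \<in> lattice u \<Longrightarrow> q \<in> lattice u \<Longrightarrow> p - q \<in> lattice u"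
  unfolding lattice_lc by (auto simp: lc_diff)

lemma lattice_neg: "p \<in> lattice u \<Longrightarrow> - p \<in> lattice u"
  unfolding lattice_lc by (auto simp: lc_neg)

lemma zero_lattice: "0 \<in> lattice u"
  using zero_cone cone_lattice by blast

lemma lattice_shift_cone: "x \<in> lattice u \<Longrightarrow> \<exists>q\<in>cone u. x + q \<in> cone u"
proof -
  assume "x \<in> lattice u"
  then obtain c where x: "x = lc u c" unfolding lattice_lc by auto
  have "lc u (\<lambda>i. \<bar>c i\<bar>) \<in> cone u" unfolding cone_lc by auto
  moreover have "x + lc u (\<lambda>i. \<bar>c i\<bar>) \<in> cone u" unfolding x lc_add cone_lc by auto
  ultimately show ?thesis by blast
qed

lemma finite_shift_cone: "finite X \<Longrightarrow> X \<subseteq> lattice u \<Longrightarrow> \<exists>q\<in>cone u. \<forall>x\<in>X. x + q \<in> cone u"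
proof (induction X rule: finite_induct)
  case empty then show ?case using zero_cone by blast
next
  case (insert x X)
  then obtain q where q: "q \<in> cone u" "\<forall>y\<in>X. y + q \<in> cone u" by auto
  obtain q' where q': "q' \<in> cone u" "x + q' \<in> cone u" using lattice_shift_cone insert by blast
  have "q + q' \<in> cone u" using q q' cone_add by blast
  moreover have "\<forall>y\<in>insert x X. y + (q + q') \<in> cone u"
    using q q' cone_add by (auto simp: add.assoc[symmetric]) (metis add.assoc add.commute cone_add)
  ultimately show ?case by blast
qed

lemma congL_iff: "congL u x y \<longleftrightarrow> x - y \<in> lattice u" by (simp add: congL_def)


lemma scrW_sub: "scrW u W \<subseteq> W" by (auto simp: scrW_def)

lemma notscrW: "w \<in> W \<Longrightarrow> w \<notin> scrW u W \<Longrightarrow> p \<in> cone u \<Longrightarrow> w + p \<in> W"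
  by (auto simp: scrW_def)

lemma wf_calW:
  assumes indep: "lin_indep_Z u" and ep: "eventually_periodic u W" and w: "w \<in> W - scrW u W"
  shows "\<exists>v\<in>calW u W. w - v \<in> cone u"
proof -
  obtain F where F: "finite F" "W \<subseteq> sumset F (cone u)" using ep unfolding eventually_periodic_def by blast
  define co where "co x = (SOME e. x = lc u e)" for x
  define B where "B = Max ((\<lambda>f. if w - f \<in> lattice u then sum (co (w - f)) UNIV else 0) ` F)"
  define D where "D = {c. (\<forall>i. c i \<ge> 0) \<and> w - lc u c \<in> W - scrW u W}"
  have bound: "sum c UNIV \<le> B" if c: "c \<in> D" for c
  proof -
    have "w - lc u c \<in> W" using c by (auto simp: D_def)
    then obtain f p where fp: "f \<in> F" "p \<in> cone u" "w - lc u c = f + p"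
      using F(2) by (auto simp: sumset_def)
    obtain q where q: "\<forall>i. q i \<ge> 0" "p = lc u q" using fp(2) unfolding cone_lc by auto
    have eq: "w - f = lc u (\<lambda>i. c i + q i)"
      using fp(3) q(2) lc_add[of u c q] by (simp add: algebra_simps)
    hence lat: "w - f \<in> lattice u" unfolding lattice_lc by auto
    have "w - f = lc u (co (w - f))" unfolding co_def using eq by (rule someI[where P="\<lambda>e. w - f = lc u e"])
    hence co: "co (w - f) = (\<lambda>i. c i + q i)" using lc_inj[OF indep] eq by metis
    have "sum c UNIV \<le> sum (\<lambda>i. c i + q i) UNIV"
      by (rule sum_mono) (use q in auto)
    also have "\<dots> = (if w - f \<in> lattice u then sum (co (w - f)) UNIV else 0)" using lat co by simp
    also have "\<dots> \<le> B" unfolding B_def using F(1) fp(1) by (intro Max_ge) auto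
    finally show ?thesis .
  qed
  have D0: "(\<lambda>i. 0) \<in> D" using w by (simp add: D_def lc_zero)
  define S where "S = (\<lambda>c. sum c UNIV) ` D"
  have Ssub: "S \<subseteq> {0..B}" unfolding S_def using bound by (auto simp: D_def intro!: sum_nonneg)
  hence finS: "finite S" using finite_subset by blast
  have "S \<noteq> {}" using D0 S_def by auto
  hence "Max S \<in> S" using finS by simp
  then obtain c where c: "c \<in> D" "sum c UNIV = Max S" unfolding S_def by auto
  have cmax: "sum c' UNIV \<le> sum c UNIV" if "c' \<in> D" for c'
    using that c(2) finS unfolding S_def by simp
  define v where "v = w - lc u c"
  have vW: "v \<in> W - scrW u W" using c(1) by (simp add: D_def v_def)
  have "v \<in> calW u W"
  proof -
    have "(\<lambda>p. v - p) ` cone u \<inter> (W - scrW u W) \<subseteq> {v}"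
    proof
      fix y assume y: "y \<in> (\<lambda>p. v - p) ` cone u \<inter> (W - scrW u W)"
      then obtain c' where c': "\<forall>i. c' i \<ge> 0" "y = v - lc u c'" unfolding cone_lc by auto
      have "w - lc u (\<lambda>i. c i + c' i) = y" using c'(2) lc_add[of u c c'] by (simp add: v_def algebra_simps)
      hence "(\<lambda>i. c i + c' i) \<in> D" using y c(1) c'(1) by (auto simp: D_def add_nonneg_nonneg)
      hence "sum (\<lambda>i. c i + c' i) UNIV \<le> sum c UNIV" by (rule cmax)
      hence "sum c' UNIV \<le> 0" by (simp add: sum.distrib)
      hence "sum c' UNIV = 0" using c'(1) by (simp add: sum_nonneg order_antisym)
      hence "\<forall>i. c' i = 0" using c'(1) by (simp add: sum_nonneg_eq_0_iff)
      hence "c' = (\<lambda>i. 0)" by auto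
      thus "y \<in> {v}" using c'(2) lc_zero[of u] by simp
    qed
    moreover have "v \<in> (\<lambda>p. v - p) ` cone u" using zero_cone[of u] by force
    ultimately show ?thesis using vW unfolding calW_def by blast
  qed
  moreover have "w - v \<in> cone u" using c(1) by (auto simp: v_def D_def cone_lc)
  ultimately show ?thesis by blast
qed


lemma congL_refl: "congL u x x" by (simp add: congL_def zero_lattice)
lemma congL_sym: "congL u x y \<Longrightarrow> congL u y x"
  unfolding congL_def using lattice_neg by fastforce
lemma congL_trans: "congL u x y \<Longrightarrow> congL u y z \<Longrightarrow> congL u x z"
  unfolding congL_def using lattice_add by fastforce
lemma congL_add: "congL u a a' \<Longrightarrow> congL u b b' \<Longrightarrow> congL u (a + b) (a' + b')"
  unfolding congL_def using lattice_add by (fastforce simp: algebra_simps)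
lemma congL_cancel: "congL u (a + b) (a + b') \<Longrightarrow> congL u b b'"
  unfolding congL_def by simp
lemma congL_lat: "l \<in> lattice u \<Longrightarrow> congL u (x + l) x"
  unfolding congL_def by simp
lemma congL_cone: "p \<in> cone u \<Longrightarrow> congL u x (x - p)"
  unfolding congL_def using cone_lattice by auto

lemma classify:
  assumes indep: "lin_indep_Z u" and ep: "eventually_periodic u W" and s: "s \<in> W"
  shows "\<exists>w'\<in>calW u W \<union> scrW1 u W. congL u s w'"
proof (cases "s \<in> scrW u W")
  case True
  show ?thesis
  proof (cases "\<forall>v\<in>calW u W. \<not> congL u s v")
    case True2: True
    then show ?thesis using True congL_refl[of u s] unfolding scrW1_def by auto
  next
    case False
    then show ?thesis by auto
  qed
next
  case False
  then obtain v where "v \<in> calW u W" "s - v \<in> cone u" using wf_calW[OF indep ep] s by blast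
  then show ?thesis using congL_cone[of "s - v" u s] by (auto intro: congL_sym)
qed

lemma finite_scrW: "eventually_periodic u W \<Longrightarrow> finite (scrW u W)"
  unfolding eventually_periodic_def scrW_def by simp


lemma chain_cover:
  fixes Z :: "('a::ab_group_add) set"
  assumes ch: "subset.chain {N. N \<subseteq> Z \<and> sumset (Z - N) W = UNIV} C" and Cne: "C \<noteq> {}"
    and fin: "finite {w\<in>W. x - w \<in> Z}"
  shows "x \<in> sumset (Z - \<Union>C) W"
proof (rule ccontr)
  assume nx: "x \<notin> sumset (Z - \<Union>C) W"
  have sub: "(\<lambda>w. x - w) ` {w\<in>W. x - w \<in> Z} \<subseteq> \<Union>C"
  proof
    fix a assume "a \<in> (\<lambda>w. x - w) ` {w\<in>W. x - w \<in> Z}"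
    then obtain w where w: "w \<in> W" "x - w \<in> Z" "a = x - w" by auto
    show "a \<in> \<Union>C"
    proof (rule ccontr)
      assume "a \<notin> \<Union>C"
      moreover have "x = a + w" using w(3) by simp
      moreover have "a \<in> Z" using w by simp
      ultimately have "x \<in> sumset (Z - \<Union>C) W" using w unfolding sumset_def by blast
      thus False using nx by simp
    qed
  qed
  obtain B where B: "B \<in> C" "(\<lambda>w. x - w) ` {w\<in>W. x - w \<in> Z} \<subseteq> B"
    using finite_subset_Union_chain[OF finite_imageI[OF fin] sub Cne ch] by blast
  have "B \<subseteq> Z \<and> sumset (Z - B) W = UNIV" using B(1) ch unfolding subset.chain_def by blast
  then obtain a w where aw: "a \<in> Z - B" "w \<in> W" "x = a + w" unfolding sumset_def by blast
  have ax: "x - w = a" using aw(3) by simp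
  have "w \<in> {w\<in>W. x - w \<in> Z}" using aw(1,2) ax by simp
  hence "x - w \<in> B" using B(2) by blast
  hence "a \<in> B" using ax by simp
  thus False using aw by simp
qed


lemma soft_cover:
  assumes indep: "lin_indep_Z u" and ep: "eventually_periodic u W"
    and MZ: "M \<subseteq> sumset \<M> (lattice u)" and m: "m \<in> \<M>" and wm: "wm \<in> scrW1 u W"
    and un: "\<forall>m'\<in>\<M> - {m}. \<forall>w'\<in>calW u W \<union> scrW1 u W. \<not> congL u (m + wm) (m' + w')"
    and cm: "\<forall>x. congL u x (m + wm) \<longrightarrow> x \<in> sumset M W"
    and v: "v \<in> calW u W" and y: "congL u y (m + v)"
  shows "y \<in> sumset M W"
proof -
  define S where "S = {s \<in> scrW u W. s - wm \<in> lattice u}"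
  have finS: "finite S" unfolding S_def using finite_scrW[OF ep] by simp
  have "(\<lambda>s. s - wm) ` S \<subseteq> lattice u" unfolding S_def by auto
  then obtain q where q: "q \<in> cone u" "\<forall>z\<in>(\<lambda>s. s - wm) ` S. z + q \<in> cone u"
    using finite_shift_cone[OF finite_imageI[OF finS]] by blast
  define l where "l = y - m - v"
  have l: "l \<in> lattice u" using y unfolding l_def congL_def by (simp add: algebra_simps)
  define x where "x = m + wm + l - q"
  have "l - q \<in> lattice u" using l q(1) cone_lattice lattice_diff by blast
  hence "congL u x (m + wm)" unfolding x_def congL_def by (simp add: algebra_simps)
  then obtain a s where as: "a \<in> M" "s \<in> W" "x = a + s" using cm unfolding sumset_def by blast
  then obtain m' \<mu> where m': "m' \<in> \<M>" "\<mu> \<in> lattice u" "a = m' + \<mu>"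
    using MZ unfolding sumset_def by blast
  have mm: "m' = m"
  proof (rule ccontr)
    assume ne: "m' \<noteq> m"
    obtain w' where w': "w' \<in> calW u W \<union> scrW1 u W" "congL u s w'" using classify[OF indep ep as(2)] by blast
    have "congL u x (m' + w')" unfolding as(3) m'(3)
      using congL_add[OF congL_lat[OF m'(2), of m'] w'(2)] by (simp add: algebra_simps)
    hence "congL u (m + wm) (m' + w')" using \<open>congL u x (m + wm)\<close> congL_sym congL_trans by blast
    thus False using un m' ne w' by blast
  qed
  have sw: "s - wm = l - q - \<mu>" using as(3) m'(3) mm unfolding x_def by (simp add: algebra_simps)
  have swl: "s - wm \<in> lattice u" unfolding sw using \<open>l - q \<in> lattice u\<close> m'(2) lattice_diff by blast
  have sscr: "s \<in> scrW u W"
  proof (rule ccontr)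
    assume "s \<notin> scrW u W"
    then obtain v' where v': "v' \<in> calW u W" "s - v' \<in> cone u" using wf_calW[OF indep ep] as(2) by blast
    have "wm - v' = (s - v') - (s - wm)" by simp
    hence "congL u wm v'" unfolding congL_def using v'(2) cone_lattice swl lattice_diff by (metis subsetD)
    thus False using wm v'(1) unfolding scrW1_def by blast
  qed
  hence "s \<in> S" unfolding S_def using swl by simp
  hence p: "s - wm + q \<in> cone u" using q(2) by blast
  have vW: "v \<in> W" "v \<notin> scrW u W" using v unfolding calW_def by auto
  have "v + (s - wm + q) \<in> W" using notscrW[OF vW p] .
  moreover have "y = a + (v + (s - wm + q))"
    using as(3) unfolding x_def l_def by (simp add: algebra_simps)
  ultimately show ?thesis using as(1) unfolding sumset_def by blast
qed


theorem theorem4p12: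
  fixes u :: "'d::finite \<Rightarrow> int ^ 'd" and W :: "(int ^ 'd) set"
  assumes indep: "lin_indep_Z u"
    and ep: "eventually_periodic u W"
    and ne: "scrW1 u W \<noteq> {}"
    and M: "finite \<M>" "\<M> \<noteq> {}"
    and inj: "\<forall>m\<in>\<M>. \<forall>m'\<in>\<M>. congL u m m' \<longrightarrow> m = m'"
    and cover: "\<forall>x. \<exists>y \<in> sumset \<M> (calW u W \<union> scrW1 u W). congL u x y"
    and uniq: "\<forall>m\<in>\<M>. \<exists>w\<in>scrW1 u W. \<forall>m'\<in>\<M> - {m}. \<forall>w'\<in>calW u W \<union> scrW1 u W.
                  \<not> congL u (m + w) (m' + w')"
  shows "\<exists>M. is_minimal_complement M W"
proof -
  define Z where "Z = sumset \<M> (lattice u)"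
  define A where "A = {N. N \<subseteq> Z \<and> sumset (Z - N) W = UNIV}"
  define soft where "soft x \<longleftrightarrow> (\<exists>m\<in>\<M>. \<exists>v\<in>calW u W. congL u x (m + v))" for x
  have WsubW: "calW u W \<union> scrW1 u W \<subseteq> W" unfolding calW_def scrW1_def scrW_def by auto
  have finR: "finite {w\<in>W. x - w \<in> Z}" if ns: "\<not> soft x" for x
  proof -
    have "{w\<in>W. x - w \<in> Z} \<subseteq> scrW u W"
    proof
      fix w assume w: "w \<in> {w\<in>W. x - w \<in> Z}"
      show "w \<in> scrW u W"
      proof (rule ccontr)
        assume "w \<notin> scrW u W"
        then obtain v where v: "v \<in> calW u W" "w - v \<in> cone u" using wf_calW[OF indep ep] w by blast
        obtain m \<mu> where m: "m \<in> \<M>" "\<mu> \<in> lattice u" "x - w = m + \<mu>" using w unfolding Z_def sumset_def by blast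
        have "x - (m + v) = \<mu> + (w - v)" using m(3) by (simp add: algebra_simps)
        hence "congL u x (m + v)" unfolding congL_def using m(2) v(2) cone_lattice lattice_add by (metis subsetD)
        thus False using ns m(1) v(1) unfolding soft_def by blast
      qed
    qed
    thus ?thesis using finite_scrW[OF ep] finite_subset by blast
  qed
  have Zcov: "sumset Z W = UNIV"
  proof -
    have "x \<in> sumset Z W" for x
    proof -
      obtain m w' where mw: "m \<in> \<M>" "w' \<in> calW u W \<union> scrW1 u W" "congL u x (m + w')"
        using cover unfolding sumset_def by blast
      have "x - m - w' \<in> lattice u" using mw(3) by (simp add: congL_def algebra_simps)
      hence "m + (x - m - w') \<in> Z" unfolding Z_def sumset_def using mw(1) by blast
      moreover have "x = (m + (x - m - w')) + w'" by simp
      ultimately show ?thesis using mw(2) WsubW unfolding sumset_def by blast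
    qed
    thus ?thesis by auto
  qed
  have "\<exists>N\<in>A. \<forall>X\<in>A. N \<subseteq> X \<longrightarrow> X = N"
  proof (rule subset_Zorn')
    fix C assume ch: "subset.chain A C"
    show "\<Union>C \<in> A"
    proof (cases "C = {}")
      case True
      then show ?thesis using Zcov unfolding A_def by simp
    next
      case Cne: False
      have sub: "\<Union>C \<subseteq> Z" using ch unfolding subset.chain_def A_def by blast
      have hard: "x \<in> sumset (Z - \<Union>C) W" if "\<not> soft x" for x
        using chain_cover[OF ch[unfolded A_def] Cne finR[OF that]] .
      have "x \<in> sumset (Z - \<Union>C) W" for x
      proof (cases "soft x")
        case False then show ?thesis using hard by blast
      next
        case True
        then obtain m v where mv: "m \<in> \<M>" "v \<in> calW u W" "congL u x (m + v)" unfolding soft_def by blast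
        obtain wm where wm: "wm \<in> scrW1 u W" "\<forall>m'\<in>\<M> - {m}. \<forall>w'\<in>calW u W \<union> scrW1 u W.
                  \<not> congL u (m + wm) (m' + w')" using uniq mv(1) by blast
        have cm: "\<forall>x. congL u x (m + wm) \<longrightarrow> x \<in> sumset (Z - \<Union>C) W"
        proof (intro allI impI)
          fix x' assume x': "congL u x' (m + wm)"
          have "\<not> soft x'"
          proof
            assume "soft x'"
            then obtain m'' v'' where mv'': "m'' \<in> \<M>" "v'' \<in> calW u W" "congL u x' (m'' + v'')"
              unfolding soft_def by blast
            have c: "congL u (m + wm) (m'' + v'')" using x' mv''(3) congL_sym congL_trans by blast
            show False
            proof (cases "m'' = m")
              case True
              hence "congL u wm v''" using c congL_cancel by blast
              thus False using wm(1) mv''(2) unfolding scrW1_def by blast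
            next
              case False
              thus False using wm(2) mv''(1,2) c by blast
            qed
          qed
          thus "x' \<in> sumset (Z - \<Union>C) W" using hard by blast
        qed
        show ?thesis
          by (rule soft_cover[OF indep ep _ mv(1) wm(1) wm(2) cm mv(2) mv(3)]) (auto simp: Z_def)
      qed
      hence "sumset (Z - \<Union>C) W = UNIV" by auto
      thus ?thesis using sub unfolding A_def by blast
    qed
  qed
  then obtain N where N: "N \<in> A" "\<forall>X\<in>A. N \<subseteq> X \<longrightarrow> X = N" by blast
  have NA: "N \<subseteq> Z" "sumset (Z - N) W = UNIV" using N(1) unfolding A_def by auto
  have "is_minimal_complement (Z - N) W"
    unfolding is_minimal_complement_def is_complement_def
  proof (intro conjI allI impI)
    show "sumset (Z - N) W = UNIV" by (rule NA(2))
    show "Z - N \<noteq> {}"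
    proof
      assume "Z - N = {}"
      hence "sumset (Z - N) W = {}" unfolding sumset_def by auto
      thus False using NA(2) by simp
    qed
    fix M' assume M': "M' \<subset> Z - N"
    show "\<not> (M' \<noteq> {} \<and> sumset M' W = UNIV)"
    proof
      assume h: "M' \<noteq> {} \<and> sumset M' W = UNIV"
      have "Z - (Z - M') = M'" using M' by blast
      hence "Z - M' \<in> A" using h unfolding A_def by auto
      moreover have "N \<subseteq> Z - M'" using M' NA(1) by blast
      ultimately have "Z - M' = N" using N(2) by blast
      hence "M' = Z - N" using M' by blast
      thus False using M' by blast
    qed
  qed
  thus ?thesis by blast
qed

end
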